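(* Let $A=(S,\delta,s_0,F)$ be a $\mathbf{JSL}$-dfa over $\Sigma$. Then: (1) for every $s\in S$, the language accepted by the state $s$ in $A^{\mathsf{op}}$ is $\{w\in\Sigma^*: \delta_{w^r}(s_0)\not\le_S s\}$; (2) if $A$ accepts $L$, then $A^{\mathsf{op}}$ accepts $L^r=\{w^r: w\in L\}$; (3) $[\mathrm{reach}(A)]^{\mathsf{op}}\cong\mathrm{simple}(A^{\mathsf{op}})$ as $\mathbf{JSL}$-dfas; in particular $A$ is reachable if and only if $A^{\mathsf{op}}$ is simple.
   Context: Finite semilattices have joins of all finite subsets; their morphisms preserve finite joins. A $\mathbf{JSL}$-dfa $A=(S,\delta,s_0,F)$: a finite semilattice $S$, semilattice morphisms $\delta_a\colon S\to S$ ($a\in\Sigma$), initial state $s_0$, final states $F=\{s:s\not\le s_f\}$ for some $s_f\in S$. Write $\delta_w=\delta_{a_n}\circ\cdots\circ\delta_{a_1}$ for $w=a_1\cdots a_n$, and $w^r=a_n\cdots a_1$. The language accepted by a state $s$ is $L(A,s)=\{w:\delta_w(s)\in F\}$, and $A$ accepts $L(A,s_0)$. Morphisms of $\mathbf{JSL}$-dfas are semilattice morphisms preserving transitions, initial state and final states (both ways). The dual $A^{\mathsf{op}}$ has states $S^{\mathsf{op}}$ (reversed order), transitions $\delta^*_a(s)=$ the $\le_S$-largest $t$ with $\delta_a(t)\le_S s$, initial state the $\le_S$-largest non-final state of $A$, and final states $\{s: s_0\not\le_S s\}$. $A$ is reachable if every state is a finite join of states $\delta_w(s_0)$; $\mathrm{reach}(A)$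 is the sub-$\mathbf{JSL}$-dfa on the set of all such finite joins. $A$ is simple if distinct states accept distinct languages; $\mathrm{simple}(A)$ is the $\mathbf{JSL}$-dfa whose states are the languages $L(A,s)$, $s\in S$, ordered by inclusion (join $=$ union), with transitions $K\mapsto a^{-1}K=\{w:aw\in K\}$, initial state $L(A,s_0)$, and final states the $K$ with $\epsilon\in K$. *)

theory Defs
  imports Main
begin

definition is_lub :: "('s \<Rightarrow> 's \<Rightarrow> bool) \<Rightarrow> 's set \<Rightarrow> 's set \<Rightarrow> 's \<Rightarrow> bool" where
  "is_lub le S X j \<longleftrightarrow> j \<in> S \<and> (\<forall>x\<in>X. le x j) \<and> (\<forall>u\<in>S. (\<forall>x\<in>X. le x u) \<longrightarrow> le j u)"

definition Join :: "('s \<Rightarrow> 's \<Rightarrow> bool) \<Rightarrow> 's set \<Rightarrow> 's set \<Rightarrow> 's" where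
  "Join le S X = (THE j. is_lub le S X j)"

definition finite_jsl :: "'s set \<Rightarrow> ('s \<Rightarrow> 's \<Rightarrow> bool) \<Rightarrow> bool" where
  "finite_jsl S le \<longleftrightarrow> finite S
     \<and> (\<forall>x\<in>S. le x x)
     \<and> (\<forall>x\<in>S. \<forall>y\<in>S. le x y \<and> le y x \<longrightarrow> x = y)
     \<and> (\<forall>x\<in>S. \<forall>y\<in>S. \<forall>z\<in>S. le x y \<and> le y z \<longrightarrow> le x z)
     \<and> (\<forall>X. X \<subseteq> S \<and> finite X \<longrightarrow> (\<exists>j. is_lub le S X j))"

definition jsl_hom :: "'s set \<Rightarrow> ('s \<Rightarrow> 's \<Rightarrow> bool) \<Rightarrow> 't set \<Rightarrow> ('t \<Rightarrow> 't \<Rightarrow> bool) \<Rightarrow> ('s \<Rightarrow> 't) \<Rightarrow> bool" where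
  "jsl_hom S le T le' f \<longleftrightarrow> (\<forall>x\<in>S. f x \<in> T)
     \<and> (\<forall>X. X \<subseteq> S \<and> finite X \<longrightarrow> f (Join le S X) = Join le' T (f ` X))"

definition greatest :: "('s \<Rightarrow> 's \<Rightarrow> bool) \<Rightarrow> 's set \<Rightarrow> ('s \<Rightarrow> bool) \<Rightarrow> 's" where
  "greatest le S P = (THE t. t \<in> S \<and> P t \<and> (\<forall>u\<in>S. P u \<longrightarrow> le u t))"

record ('s, 'a) jsl_dfa =
  states :: "'s set"
  leq    :: "'s \<Rightarrow> 's \<Rightarrow> bool"
  delta  :: "'a \<Rightarrow> 's \<Rightarrow> 's"
  init   :: 's
  final  :: "'s set"

definition is_jsl_dfa :: "('s, 'a) jsl_dfa \<Rightarrow> bool" where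
  "is_jsl_dfa A \<longleftrightarrow> finite_jsl (states A) (leq A)
     \<and> (\<forall>a. jsl_hom (states A) (leq A) (states A) (leq A) (delta A a))
     \<and> init A \<in> states A
     \<and> (\<exists>sf\<in>states A. final A = {s \<in> states A. \<not> leq A s sf})"

definition deltaw :: "('s, 'a) jsl_dfa \<Rightarrow> 'a list \<Rightarrow> 's \<Rightarrow> 's" where
  "deltaw A w s = fold (delta A) w s"

definition lang :: "('s, 'a) jsl_dfa \<Rightarrow> 's \<Rightarrow> 'a list set" where
  "lang A s = {w. deltaw A w s \<in> final A}"

definition dual :: "('s, 'a) jsl_dfa \<Rightarrow> ('s, 'a) jsl_dfa" where
  "dual A = \<lparr> states = states A,
              leq = (\<lambda>x y. leq A y x),
              delta = (\<lambda>a s. greatest (leq A) (states A) (\<lambda>t. leq A (delta A a t) s)),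
              init = greatest (leq A) (states A) (\<lambda>t. t \<notin> final A),
              final = {s \<in> states A. \<not> leq A (init A) s} \<rparr>"

definition reach_set :: "('s, 'a) jsl_dfa \<Rightarrow> 's set" where
  "reach_set A = {Join (leq A) (states A) X | X.
       finite X \<and> X \<subseteq> range (\<lambda>w. deltaw A w (init A))}"

definition reach :: "('s, 'a) jsl_dfa \<Rightarrow> ('s, 'a) jsl_dfa" where
  "reach A = A\<lparr> states := reach_set A, final := final A \<inter> reach_set A \<rparr>"

definition reachable :: "('s, 'a) jsl_dfa \<Rightarrow> bool" where
  "reachable A \<longleftrightarrow> states A \<subseteq> reach_set A"

definition simple :: "('s, 'a) jsl_dfa \<Rightarrow> ('a list set, 'a) jsl_dfa" where
  "simple A = \<lparr> states = lang A ` states A,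
                leq = (\<subseteq>),
                delta = (\<lambda>a K. {w. a # w \<in> K}),
                init = lang A (init A),
                final = {K \<in> lang A ` states A. [] \<in> K} \<rparr>"

definition is_simple :: "('s, 'a) jsl_dfa \<Rightarrow> bool" where
  "is_simple A \<longleftrightarrow> (\<forall>s\<in>states A. \<forall>t\<in>states A. lang A s = lang A t \<longrightarrow> s = t)"

definition dfa_hom :: "('s, 'a) jsl_dfa \<Rightarrow> ('t, 'a) jsl_dfa \<Rightarrow> ('s \<Rightarrow> 't) \<Rightarrow> bool" where
  "dfa_hom A B f \<longleftrightarrow> jsl_hom (states A) (leq A) (states B) (leq B) f
     \<and> (\<forall>a. \<forall>s\<in>states A. f (delta A a s) = delta B a (f s))
     \<and> f (init A) = init B
     \<and> (\<forall>s\<in>states A. s \<in> final A \<longleftrightarrow> f s \<in> final B)"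

definition dfa_iso :: "('s, 'a) jsl_dfa \<Rightarrow> ('t, 'a) jsl_dfa \<Rightarrow> bool" where
  "dfa_iso A B \<longleftrightarrow> (\<exists>f g. dfa_hom A B f \<and> dfa_hom B A g
      \<and> (\<forall>s\<in>states A. g (f s) = s) \<and> (\<forall>t\<in>states B. f (g t) = t))"

end

theory Submission
  imports Defs
begin


lemma Join_eq_lub:
  assumes "\<forall>x\<in>S. \<forall>y\<in>S. le x y \<and> le y x \<longrightarrow> x = y" "is_lub le S X j"
  shows "Join le S X = j"
  unfolding Join_def
proof (rule the_equality)
  show "is_lub le S X j" by fact
  fix j' assume "is_lub le S X j'"
  with assms show "j' = j" unfolding is_lub_def by blast
qed

lemma join_transfer:
  assumes "\<forall>x\<in>S1. f x \<in> S2" "\<forall>u\<in>S2. \<exists>v\<in>S1. u = f v"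
    "\<forall>x\<in>S1. \<forall>y\<in>S1. le1 x y \<longleftrightarrow> le2 (f x) (f y)"
    "\<forall>x\<in>S2. \<forall>y\<in>S2. le2 x y \<and> le2 y x \<longrightarrow> x = y"
    "\<forall>x\<in>S1. \<forall>y\<in>S1. le1 x y \<and> le1 y x \<longrightarrow> x = y"
    "X \<subseteq> S1" "is_lub le1 S1 X j"
  shows "f (Join le1 S1 X) = Join le2 S2 (f ` X)"
proof -
  have j: "Join le1 S1 X = j" by (rule Join_eq_lub[OF assms(5,7)])
  have jS: "j \<in> S1" and jup: "\<forall>x\<in>X. le1 x j"
    and jl: "\<forall>u\<in>S1. (\<forall>x\<in>X. le1 x u) \<longrightarrow> le1 j u"
    using assms(7) unfolding is_lub_def by auto
  have "is_lub le2 S2 (f ` X) (f j)"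
    unfolding is_lub_def
  proof (intro conjI ballI impI)
    show "f j \<in> S2" using assms(1) jS by blast
    fix x assume "x \<in> f ` X"
    then obtain y where y: "y \<in> X" "x = f y" by blast
    have "y \<in> S1" using y assms(6) by blast
    then have "le1 y j \<longleftrightarrow> le2 (f y) (f j)" using assms(3) jS by blast
    moreover have "le1 y j" using jup y by blast
    ultimately show "le2 x (f j)" using y by simp
  next
    fix u assume u: "u \<in> S2" and ub: "\<forall>x\<in>f ` X. le2 x u"
    obtain v where v: "v \<in> S1" "u = f v" using assms(2) u by blast
    have "\<forall>x\<in>X. le1 x v"
    proof
      fix x assume x: "x \<in> X"
      then have "x \<in> S1" using assms(6) by blast
      moreover have "le2 (f x) (f v)" using ub x v(2) by blast
      moreover have "le1 x v \<longleftrightarrow> le2 (f x) (f v)" using assms(3) v(1) \<open>x \<in> S1\<close> by blast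
      ultimately show "le1 x v" by simp
    qed
    then have "le1 j v" using jl v(1) by blast
    moreover have "le1 j v \<longleftrightarrow> le2 (f j) (f v)" using assms(3) v(1) jS by blast
    ultimately show "le2 (f j) u" using v(2) by simp
  qed
  then have "Join le2 S2 (f ` X) = f j" by (rule Join_eq_lub[OF assms(4)])
  then show ?thesis using j by simp
qed

lemma inv_hom:
  assumes "dfa_hom A B f" "\<forall>t\<in>states B. g t \<in> states A" "\<forall>t\<in>states B. f (g t) = t"
    "\<forall>s\<in>states A. g (f s) = s"
    "\<forall>X. X \<subseteq> states A \<and> finite X \<longrightarrow> Join (leq A) (states A) X \<in> states A"
    "\<forall>a. \<forall>s\<in>states A. delta A a s \<in> states A" "init A \<in> states A"
  shows "dfa_hom B A g"
proof -
  have hA: "jsl_hom (states A) (leq A) (states B) (leq B) f"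
    and tr: "\<forall>a. \<forall>s\<in>states A. f (delta A a s) = delta B a (f s)"
    and ini: "f (init A) = init B"
    and fin: "\<forall>s\<in>states A. s \<in> final A \<longleftrightarrow> f s \<in> final B"
    using assms(1) unfolding dfa_hom_def by auto
  have "jsl_hom (states B) (leq B) (states A) (leq A) g"
    unfolding jsl_hom_def
  proof (intro conjI allI impI ballI)
    fix x assume "x \<in> states B" then show "g x \<in> states A" using assms(2) by blast
  next
    fix X assume X: "X \<subseteq> states B \<and> finite X"
    let ?Y = "g ` X"
    have Y: "?Y \<subseteq> states A" "finite ?Y" using X assms(2) by auto
    have "f ` ?Y = X" using X assms(3) by (force simp: image_iff)
    then have "f (Join (leq A) (states A) ?Y) = Join (leq B) (states B) X"
      using hA Y unfolding jsl_hom_def by metis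
    then show "g (Join (leq B) (states B) X) = Join (leq A) (states A) ?Y"
      using assms(4,5) Y by metis
  qed
  moreover have "\<forall>a. \<forall>s\<in>states B. g (delta B a s) = delta A a (g s)"
  proof (intro allI ballI)
    fix a s assume s: "s \<in> states B"
    have "delta B a s = delta B a (f (g s))" using assms(3) s by simp
    also have "\<dots> = f (delta A a (g s))" using tr assms(2) s by simp
    finally show "g (delta B a s) = delta A a (g s)" using assms(4,6,2) s by simp
  qed
  moreover have "g (init B) = init A" using ini assms(4,7) by metis
  moreover have "\<forall>s\<in>states B. s \<in> final B \<longleftrightarrow> g s \<in> final A"
    using fin assms(2,3) by metis
  ultimately show ?thesis unfolding dfa_hom_def by blast
qed

locale jsl =
  fixes S :: "'s set" and le :: "'s \<Rightarrow> 's \<Rightarrow> bool"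
  assumes fj: "finite_jsl S le"
begin

lemma fin: "finite S" and refl: "x \<in> S \<Longrightarrow> le x x"
  and antisym: "x \<in> S \<Longrightarrow> y \<in> S \<Longrightarrow> le x y \<Longrightarrow> le y x \<Longrightarrow> x = y"
  and trans: "x \<in> S \<Longrightarrow> y \<in> S \<Longrightarrow> z \<in> S \<Longrightarrow> le x y \<Longrightarrow> le y z \<Longrightarrow> le x z"
  using fj unfolding finite_jsl_def by blast+

lemma Join_lub: "X \<subseteq> S \<Longrightarrow> is_lub le S X (Join le S X)"
proof -
  assume X: "X \<subseteq> S"
  then have "finite X" using fin finite_subset by blast
  then obtain j where j: "is_lub le S X j" using fj X unfolding finite_jsl_def by blast
  have "Join le S X = j" using Join_eq_lub[OF _ j] antisym by blast
  then show ?thesis using j by simp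
qed

lemma Join_in: "X \<subseteq> S \<Longrightarrow> Join le S X \<in> S"
  and Join_upper: "X \<subseteq> S \<Longrightarrow> x \<in> X \<Longrightarrow> le x (Join le S X)"
  and Join_least: "X \<subseteq> S \<Longrightarrow> u \<in> S \<Longrightarrow> (\<And>x. x \<in> X \<Longrightarrow> le x u) \<Longrightarrow> le (Join le S X) u"
  using Join_lub unfolding is_lub_def by blast+

lemma Join_single: "x \<in> S \<Longrightarrow> Join le S {x} = x"
  by (rule Join_eq_lub) (auto simp: is_lub_def refl intro: antisym)

lemma hom_in: "jsl_hom S le S le h \<Longrightarrow> x \<in> S \<Longrightarrow> h x \<in> S"
  unfolding jsl_hom_def by blast

lemma hom_mono:
  assumes h: "jsl_hom S le S le h" and x: "x \<in> S" and y: "y \<in> S" and xy: "le x y"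
  shows "le (h x) (h y)"
proof -
  have "is_lub le S {x, y} y" using x y xy refl unfolding is_lub_def by auto
  have as: "\<forall>x\<in>S. \<forall>y\<in>S. le x y \<and> le y x \<longrightarrow> x = y" using antisym by blast
  have e: "Join le S {x,y} = y" by (rule Join_eq_lub[OF as \<open>is_lub le S {x, y} y\<close>])
  have "{x,y} \<subseteq> S \<and> finite {x,y}" using x y by simp
  then have "h (Join le S {x,y}) = Join le S (h ` {x,y})" using h unfolding jsl_hom_def by blast
  then have e2: "h y = Join le S {h x, h y}" using e by simp
  have "{h x, h y} \<subseteq> S" using hom_in[OF h] x y by simp
  then have "le (h x) (Join le S {h x, h y})" by (rule Join_upper) simp
  then show ?thesis using e2 by simp
qed

lemma greatest_eq:
  assumes T: "T \<subseteq> S" and t: "t \<in> T" "P t" and gr: "\<forall>u\<in>T. P u \<longrightarrow> le u t"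
  shows "greatest le T P = t"
  unfolding greatest_def
proof (rule the_equality)
  show "t \<in> T \<and> P t \<and> (\<forall>u\<in>T. P u \<longrightarrow> le u t)" using t gr by blast
  fix t' assume t': "t' \<in> T \<and> P t' \<and> (\<forall>u\<in>T. P u \<longrightarrow> le u t')"
  then have "le t t'" "le t' t" using t gr by auto
  moreover have "t \<in> S" "t' \<in> S" using T t t' by auto
  ultimately show "t' = t" using antisym by blast
qed

definition jc :: "'s set \<Rightarrow> bool" where
  "jc T \<longleftrightarrow> T \<subseteq> S \<and> (\<forall>X. X \<subseteq> T \<longrightarrow> Join le S X \<in> T)"

lemma greatest_jc:
  assumes "jc T" "P (Join le S {t\<in>T. P t})"
  shows "greatest le T P = Join le S {t\<in>T. P t}"
  using assms unfolding jc_def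
  by (intro greatest_eq) (auto intro!: Join_upper)

lemma adj:
  assumes T: "jc T" and h: "jsl_hom S le S le h" and s: "s \<in> S"
  shows "greatest le T (\<lambda>t. le (h t) s) = Join le S {t\<in>T. le (h t) s}"
    and "t \<in> T \<Longrightarrow> le t (Join le S {t\<in>T. le (h t) s}) \<longleftrightarrow> le (h t) s"
proof -
  let ?Y = "{t\<in>T. le (h t) s}"
  have TS: "T \<subseteq> S" using T unfolding jc_def by blast
  have Y1: "?Y \<subseteq> S" using TS by auto
  have Y: "?Y \<subseteq> S" "finite ?Y" using Y1 finite_subset[OF Y1 fin] by auto
  have "h (Join le S ?Y) = Join le S (h ` ?Y)" using h Y unfolding jsl_hom_def by blast
  moreover have "le (Join le S (h ` ?Y)) s"
    using Y s h by (intro Join_least) (auto simp: jsl_hom_def)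
  ultimately have P: "le (h (Join le S ?Y)) s" by simp
  then show "greatest le T (\<lambda>t. le (h t) s) = Join le S ?Y" using greatest_jc[OF T] by simp
  assume t: "t \<in> T"
  show "le t (Join le S ?Y) \<longleftrightarrow> le (h t) s"
  proof
    assume "le t (Join le S ?Y)"
    then have "le (h t) (h (Join le S ?Y))" using hom_mono[OF h] t TS Join_in Y by blast
    moreover have "h t \<in> S" using hom_in[OF h] t TS by blast
    moreover have "h (Join le S ?Y) \<in> S" using hom_in[OF h] Join_in Y by blast
    ultimately show "le (h t) s" using P trans s by blast
  next
    assume "le (h t) s" then show "le t (Join le S ?Y)" using t Y Join_upper by blast
  qed
qed

end

theorem lemma3p8:
  fixes A :: "('s, 'a) jsl_dfa"
  assumes "is_jsl_dfa A"
  shows "(\<forall>s\<in>states A. lang (dual A) s = {w. \<not> leq A (deltaw A (rev w) (init A)) s})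
    \<and> (\<forall>L. lang A (init A) = L \<longrightarrow> lang (dual A) (init (dual A)) = rev ` L)
    \<and> dfa_iso (dual (reach A)) (simple (dual A))
    \<and> (reachable A \<longleftrightarrow> is_simple (dual A))"
proof -
  have F: "finite_jsl (states A) (leq A)"
    and H: "\<And>a. jsl_hom (states A) (leq A) (states A) (leq A) (delta A a)"
    and s0: "init A \<in> states A"
    using assms unfolding is_jsl_dfa_def by blast+
  obtain sf where sf: "sf \<in> states A" "final A = {s \<in> states A. \<not> leq A s sf}"
    using assms unfolding is_jsl_dfa_def by blast
  interpret J: jsl "states A" "leq A" using F by unfold_locales
  have jcS: "J.jc (states A)" unfolding J.jc_def using J.Join_in by blast
  have din: "\<And>a s. s \<in> states A \<Longrightarrow> delta A a s \<in> states A" using H J.hom_in by blast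
  have dwin: "\<And>w s. s \<in> states A \<Longrightarrow> deltaw A w s \<in> states A"
  proof -
    fix w s show "s \<in> states A \<Longrightarrow> deltaw A w s \<in> states A"
      by (induction w arbitrary: s) (auto simp: deltaw_def din)
  qed
  have dwsnoc: "\<And>w a s. deltaw A (w @ [a]) s = delta A a (deltaw A w s)"
    by (simp add: deltaw_def)
  have dwcons: "\<And>B w a s. deltaw B (a # w) s = deltaw B w (delta B a s)"
    by (simp add: deltaw_def)
  let ?Dl = "\<lambda>a s. Join (leq A) (states A) {t \<in> states A. leq A (delta A a t) s}"
  have dstates: "states (dual A) = states A" by (simp add: dual_def)
  have ddelta: "\<And>a s. s \<in> states A \<Longrightarrow> delta (dual A) a s = ?Dl a s"
    using J.adj(1)[OF jcS H] by (simp add: dual_def)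
  have dadj: "\<And>a s t. s \<in> states A \<Longrightarrow> t \<in> states A \<Longrightarrow>
      leq A t (delta (dual A) a s) \<longleftrightarrow> leq A (delta A a t) s"
    using J.adj(2)[OF jcS H] ddelta by simp
  have ddin: "\<And>a s. s \<in> states A \<Longrightarrow> delta (dual A) a s \<in> states A"
    using ddelta J.Join_in by simp
  have ddwin: "\<And>w s. s \<in> states A \<Longrightarrow> deltaw (dual A) w s \<in> states A"
  proof -
    fix w s show "s \<in> states A \<Longrightarrow> deltaw (dual A) w s \<in> states A"
      by (induction w arbitrary: s) (auto simp: deltaw_def ddin)
  qed
  have dwadj: "\<And>w s t. s \<in> states A \<Longrightarrow> t \<in> states A \<Longrightarrow>
      leq A t (deltaw (dual A) w s) \<longleftrightarrow> leq A (deltaw A (rev w) t) s"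
  proof -
    fix w show "\<And>s t. s \<in> states A \<Longrightarrow> t \<in> states A \<Longrightarrow>
      leq A t (deltaw (dual A) w s) \<longleftrightarrow> leq A (deltaw A (rev w) t) s"
    proof (induction w)
      case Nil then show ?case by (simp add: deltaw_def)
    next
      case (Cons a w)
      have "leq A t (deltaw (dual A) (a # w) s) \<longleftrightarrow> leq A (deltaw A (rev w) t) (delta (dual A) a s)"
        using Cons.IH[of "delta (dual A) a s" t] Cons.prems ddin by (simp add: dwcons)
      also have "\<dots> \<longleftrightarrow> leq A (delta A a (deltaw A (rev w) t)) s"
        using dadj Cons.prems dwin by blast
      finally show ?case by (simp add: dwsnoc)
    qed
  qed
  have dinit: "init (dual A) = sf"
    unfolding dual_def using sf J.refl by (simp, intro J.greatest_eq) auto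
  have dfinal: "final (dual A) = {s \<in> states A. \<not> leq A (init A) s}" by (simp add: dual_def)
  define K where "K s = {w. \<not> leq A (deltaw A (rev w) (init A)) s}" for s
  have P1: "\<forall>s\<in>states A. lang (dual A) s = K s"
  proof
    fix s assume s: "s \<in> states A"
    show "lang (dual A) s = K s"
      unfolding lang_def K_def dfinal using ddwin[OF s] dwadj[OF s s0] by auto
  qed
  have P2: "\<forall>L. lang A (init A) = L \<longrightarrow> lang (dual A) (init (dual A)) = rev ` L"
  proof (intro allI impI)
    fix L assume L: "lang A (init A) = L"
    have "lang (dual A) (init (dual A)) = K sf" using P1 dinit sf by simp
    also have "\<dots> = rev ` L"
    proof (rule set_eqI)
      fix w
      have "w \<in> rev ` L \<longleftrightarrow> rev w \<in> L" by (force simp: image_iff)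
      then show "w \<in> K sf \<longleftrightarrow> w \<in> rev ` L"
        using L sf dwin[OF s0] by (auto simp: K_def lang_def)
    qed
    finally show "lang (dual A) (init (dual A)) = rev ` L" .
  qed
  define Rch where "Rch = range (\<lambda>w. deltaw A w (init A))"
  define R where "R = reach_set A"
  have RchS: "Rch \<subseteq> states A" unfolding Rch_def using dwin s0 by blast
  have finS: "\<And>X. X \<subseteq> states A \<Longrightarrow> finite X" by (rule finite_subset[OF _ J.fin])
  have R_def': "R = {Join (leq A) (states A) X | X. finite X \<and> X \<subseteq> Rch}"
    unfolding R_def reach_set_def Rch_def by (rule refl)
  define rc where "rc s = Join (leq A) (states A) {x \<in> Rch. leq A x s}" for s
  have rcR: "\<And>s. rc s \<in> R"
  proof -
    fix s
    let ?X = "{x \<in> Rch. leq A x s}"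
    have sub: "?X \<subseteq> Rch" by blast
    have "?X \<subseteq> states A" using sub RchS by (rule subset_trans)
    then have fin: "finite ?X" by (rule finS)
    have "rc s = Join (leq A) (states A) ?X \<and> finite ?X \<and> ?X \<subseteq> Rch"
      using fin sub by (simp add: rc_def)
    then have "\<exists>X. rc s = Join (leq A) (states A) X \<and> finite X \<and> X \<subseteq> Rch" by (rule exI)
    then show "rc s \<in> R" unfolding R_def' by (simp only: mem_Collect_eq)
  qed
  have RS: "R \<subseteq> states A"
  proof
    fix r assume "r \<in> R"
    then obtain X where X: "r = Join (leq A) (states A) X" "X \<subseteq> Rch" unfolding R_def' by blast
    then have "X \<subseteq> states A" using RchS by blast
    then show "r \<in> states A" using X(1) J.Join_in by simp
  qed
  have rcS: "\<And>s. rc s \<in> states A" using rcR RS by blast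
  have rc_le: "\<And>s. s \<in> states A \<Longrightarrow> leq A (rc s) s"
    unfolding rc_def using RchS by (intro J.Join_least) auto
  have rc_iff: "\<And>x s. x \<in> Rch \<Longrightarrow> s \<in> states A \<Longrightarrow> leq A x (rc s) \<longleftrightarrow> leq A x s"
  proof
    fix x s assume x: "x \<in> Rch" and s: "s \<in> states A"
    have xS: "x \<in> states A" using x RchS by blast
    { assume "leq A x (rc s)"
      then show "leq A x s" using J.trans[OF xS rcS s] rc_le[OF s] by blast }
    { assume "leq A x s"
      then have "x \<in> {x \<in> Rch. leq A x s}" using x by blast
      moreover have "{x \<in> Rch. leq A x s} \<subseteq> states A" using RchS by blast
      ultimately show "leq A x (rc s)" unfolding rc_def using J.Join_upper by blast }
  qed
  have rc_id: "\<And>r. r \<in> R \<Longrightarrow> rc r = r"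
  proof -
    fix r assume r: "r \<in> R"
    then obtain X where X: "r = Join (leq A) (states A) X" "X \<subseteq> Rch" unfolding R_def' by blast
    have XS: "X \<subseteq> states A" using X(2) RchS by blast
    have rS: "r \<in> states A" using r RS by blast
    have "leq A r (rc r)" unfolding X(1)
    proof (rule J.Join_least[OF XS rcS])
      fix x assume x: "x \<in> X"
      have "leq A x r" unfolding X(1) using J.Join_upper[OF XS x] .
      then show "leq A x (rc (Join (leq A) (states A) X))"
        using rc_iff[of x r] x X rS by blast
    qed
    then show "rc r = r" using J.antisym[OF rcS rS] rc_le[OF rS] by blast
  qed
  have rc_mono: "\<And>x y. x \<in> states A \<Longrightarrow> y \<in> states A \<Longrightarrow> leq A x y \<Longrightarrow> leq A (rc x) (rc y)"
  proof -
    fix x y assume x: "x \<in> states A" and y: "y \<in> states A" and xy: "leq A x y"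
    have XS: "{z \<in> Rch. leq A z x} \<subseteq> states A" using RchS by blast
    have YS: "{z \<in> Rch. leq A z y} \<subseteq> states A" using RchS by blast
    show "leq A (rc x) (rc y)" unfolding rc_def
    proof (rule J.Join_least[OF XS J.Join_in[OF YS]])
      fix z assume z: "z \<in> {z \<in> Rch. leq A z x}"
      then have zS: "z \<in> states A" using XS by blast
      have "leq A z y" using J.trans[OF zS x y] z xy by blast
      then have "z \<in> {z \<in> Rch. leq A z y}" using z by blast
      then show "leq A z (Join (leq A) (states A) {z \<in> Rch. leq A z y})"
        by (rule J.Join_upper[OF YS])
    qed
  qed
  have jcR: "J.jc R" unfolding J.jc_def
  proof (intro conjI allI impI)
    show "R \<subseteq> states A" by fact
    fix X assume X: "X \<subseteq> R"
    let ?J = "Join (leq A) (states A) X"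
    have XS: "X \<subseteq> states A" using X RS by blast
    have JS: "?J \<in> states A" using J.Join_in[OF XS] .
    have "leq A ?J (rc ?J)"
    proof (rule J.Join_least[OF XS rcS])
      fix x assume x: "x \<in> X"
      have xS: "x \<in> states A" using x XS by blast
      have "leq A x ?J" using J.Join_upper[OF XS x] .
      then have "leq A (rc x) (rc ?J)" using rc_mono[OF xS JS] by blast
      moreover have "rc x = x" using rc_id x X by blast
      ultimately show "leq A x (rc ?J)" by simp
    qed
    then have "rc ?J = ?J" using J.antisym[OF rcS JS] rc_le[OF JS] by blast
    then show "?J \<in> R" using rcR[of ?J] by simp
  qed
  have RchR: "Rch \<subseteq> R"
  proof
    fix x assume x: "x \<in> Rch"
    have xS: "x \<in> states A" using x RchS by blast
    have "x = Join (leq A) (states A) {x} \<and> finite {x} \<and> {x} \<subseteq> Rch"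
      using J.Join_single[OF xS] x by simp
    then have "\<exists>X. x = Join (leq A) (states A) X \<and> finite X \<and> X \<subseteq> Rch" by (rule exI)
    then show "x \<in> R" unfolding R_def' by (simp only: mem_Collect_eq)
  qed
  have Rch_iff: "\<And>x. x \<in> Rch \<longleftrightarrow> (\<exists>w. x = deltaw A (rev w) (init A))"
    unfolding Rch_def by (metis rangeE rangeI rev_rev_ident)
  have dwR: "\<And>w. deltaw A (rev w) (init A) \<in> Rch" using Rch_iff by blast
  have K_mem: "\<And>w s. w \<in> K s \<longleftrightarrow> \<not> leq A (deltaw A (rev w) (init A)) s"
    unfolding K_def by simp
  have K_sub: "\<And>r r'. r \<in> R \<Longrightarrow> r' \<in> R \<Longrightarrow> K r \<subseteq> K r' \<longleftrightarrow> leq A r' r"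
  proof
    fix r r' assume r: "r \<in> R" and r': "r' \<in> R"
    have rS: "r \<in> states A" and r'S: "r' \<in> states A" using r r' RS by auto
    { assume sub: "K r \<subseteq> K r'"
      have YS: "{x \<in> Rch. leq A x r'} \<subseteq> states A" using RchS by blast
      have "leq A (rc r') r" unfolding rc_def
      proof (rule J.Join_least[OF YS rS])
        fix x assume x: "x \<in> {x \<in> Rch. leq A x r'}"
        then obtain w where w: "x = deltaw A (rev w) (init A)" using Rch_iff by blast
        have "w \<notin> K r'" using x w K_mem by blast
        then have "w \<notin> K r" using sub by blast
        then show "leq A x r" using w K_mem by blast
      qed
      then show "leq A r' r" using rc_id r' by simp }
    { assume le: "leq A r' r"
      show "K r \<subseteq> K r'"
      proof
        fix w assume w: "w \<in> K r"
        have xS: "deltaw A (rev w) (init A) \<in> states A" using dwin[OF s0] .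
        show "w \<in> K r'"
        proof (rule ccontr)
          assume "w \<notin> K r'"
          then have "leq A (deltaw A (rev w) (init A)) r'" using K_mem by blast
          then have "leq A (deltaw A (rev w) (init A)) r" using J.trans[OF xS r'S rS] le by blast
          then show False using w K_mem by blast
        qed
      qed }
  qed
  have K_inj: "\<And>r r'. r \<in> R \<Longrightarrow> r' \<in> R \<Longrightarrow> K r = K r' \<Longrightarrow> r = r'"
  proof -
    fix r r' assume r: "r \<in> R" and r': "r' \<in> R" and e: "K r = K r'"
    have "leq A r' r" using K_sub[OF r r'] e by simp
    moreover have "leq A r r'" using K_sub[OF r' r] e by simp
    ultimately show "r = r'" using J.antisym r r' RS by blast
  qed
  have K_rc: "\<And>s. s \<in> states A \<Longrightarrow> K (rc s) = K s"
  proof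
    fix s assume s: "s \<in> states A"
    show "K (rc s) \<subseteq> K s" using rc_iff[OF dwR s] K_mem by blast
    show "K s \<subseteq> K (rc s)" using rc_iff[OF dwR s] K_mem by blast
  qed
  define D where "D = dual (reach A)"
  have Dst: "states D = R" and Dle: "leq D = (\<lambda>x y. leq A y x)"
    and Dde: "delta D = (\<lambda>a s. greatest (leq A) R (\<lambda>t. leq A (delta A a t) s))"
    and Din: "init D = greatest (leq A) R (\<lambda>t. t \<notin> final A \<inter> R)"
    and Dfi: "final D = {s \<in> R. \<not> leq A (init A) s}"
    unfolding D_def dual_def reach_def R_def by simp_all
  define f where "f = lang (dual A)"
  define g where "g K' = Join (leq A) (states A) {deltaw A w (init A) | w. rev w \<notin> K'}" for K'
  have fK: "\<And>s. s \<in> states A \<Longrightarrow> f s = K s" using P1 unfolding f_def by blast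
  have fR: "\<And>r. r \<in> R \<Longrightarrow> f r = K r" using fK RS by blast
  have SB: "states (simple (dual A)) = f ` states A" by (simp add: simple_def dstates f_def)
  have gK: "\<And>s. s \<in> states A \<Longrightarrow> g (K s) = rc s"
  proof -
    fix s assume s: "s \<in> states A"
    have "{deltaw A w (init A) | w. rev w \<notin> K s} = {x \<in> Rch. leq A x s}"
    proof (rule set_eqI)
      fix x
      have "x \<in> {deltaw A w (init A) | w. rev w \<notin> K s} \<longleftrightarrow>
          (\<exists>w. x = deltaw A w (init A) \<and> leq A (deltaw A w (init A)) s)"
        using K_mem by simp
      also have "\<dots> \<longleftrightarrow> x \<in> {x \<in> Rch. leq A x s}" unfolding Rch_def by blast
      finally show "x \<in> {deltaw A w (init A) | w. rev w \<notin> K s} \<longleftrightarrow> x \<in> {x \<in> Rch. leq A x s}" .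
    qed
    then show "g (K s) = rc s" unfolding g_def rc_def by simp
  qed
  have g_in: "\<forall>t\<in>states (simple (dual A)). g t \<in> states D"
  proof
    fix t assume "t \<in> states (simple (dual A))"
    then obtain s where s: "s \<in> states A" "t = f s" using SB by blast
    then have "g t = rc s" using fK gK by simp
    then show "g t \<in> states D" using rcR Dst by simp
  qed
  have fg: "\<forall>t\<in>states (simple (dual A)). f (g t) = t"
  proof
    fix t assume "t \<in> states (simple (dual A))"
    then obtain s where s: "s \<in> states A" "t = f s" using SB by blast
    then have "g t = rc s" using fK gK by simp
    then have "f (g t) = K (rc s)" using fR rcR by simp
    then show "f (g t) = t" using K_rc s fK by simp
  qed
  have gf: "\<forall>s\<in>states D. g (f s) = s"
  proof
    fix s assume "s \<in> states D"
    then have s: "s \<in> R" using Dst by simp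
    then have "g (f s) = rc s" using fR[OF s] gK[of s] RS by auto
    then show "g (f s) = s" using rc_id s by simp
  qed
  have f_in: "\<forall>x\<in>R. f x \<in> states (simple (dual A))" using SB RS by blast
  have Dlub: "\<And>X. X \<subseteq> R \<Longrightarrow>
      is_lub (\<lambda>x y. leq A y x) R X (Join (leq A) (states A) {t \<in> R. \<forall>x\<in>X. leq A t x})"
  proof -
    fix X assume X: "X \<subseteq> R"
    let ?Y = "{t \<in> R. \<forall>x\<in>X. leq A t x}"
    have YR: "?Y \<subseteq> R" by blast
    have Y: "?Y \<subseteq> states A" using YR RS by (rule subset_trans)
    have JR: "Join (leq A) (states A) ?Y \<in> R" using jcR YR unfolding J.jc_def by blast
    have up: "\<forall>x\<in>X. leq A (Join (leq A) (states A) ?Y) x"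
    proof
      fix x assume x: "x \<in> X"
      have xS: "x \<in> states A" using x X RS by blast
      show "leq A (Join (leq A) (states A) ?Y) x"
      proof (rule J.Join_least[OF Y xS])
        fix t assume "t \<in> ?Y" then show "leq A t x" using x by blast
      qed
    qed
    have lst: "\<forall>u\<in>R. (\<forall>x\<in>X. leq A u x) \<longrightarrow> leq A u (Join (leq A) (states A) ?Y)"
    proof (intro ballI impI)
      fix u assume "u \<in> R" "\<forall>x\<in>X. leq A u x"
      then have "u \<in> ?Y" by blast
      then show "leq A u (Join (leq A) (states A) ?Y)" by (rule J.Join_upper[OF Y])
    qed
    show "is_lub (\<lambda>x y. leq A y x) R X (Join (leq A) (states A) ?Y)"
      unfolding is_lub_def using JR up lst by simp
  qed
  have Rantisym: "\<forall>x\<in>R. \<forall>y\<in>R. leq A y x \<and> leq A x y \<longrightarrow> x = y"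
  proof (intro ballI impI)
    fix x y assume "x \<in> R" "y \<in> R" "leq A y x \<and> leq A x y"
    then show "x = y" using J.antisym[of x y] RS by blast
  qed
  have DJ_in: "\<forall>X. X \<subseteq> states D \<and> finite X \<longrightarrow> Join (leq D) (states D) X \<in> states D"
  proof (intro allI impI)
    fix X assume "X \<subseteq> states D \<and> finite X"
    then have X: "X \<subseteq> R" using Dst by blast
    have "Join (\<lambda>x y. leq A y x) R X = Join (leq A) (states A) {t \<in> R. \<forall>x\<in>X. leq A t x}"
      by (rule Join_eq_lub[OF Rantisym Dlub[OF X]])
    moreover have "Join (leq A) (states A) {t \<in> R. \<forall>x\<in>X. leq A t x} \<in> R"
      using Dlub[OF X] unfolding is_lub_def by blast
    ultimately show "Join (leq D) (states D) X \<in> states D" unfolding Dst Dle by simp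
  qed
  have Dd: "\<And>a r. r \<in> R \<Longrightarrow> delta D a r = Join (leq A) (states A) {t \<in> R. leq A (delta A a t) r}"
  proof -
    fix a r assume r: "r \<in> R"
    have rS: "r \<in> states A" using r RS by blast
    show "delta D a r = Join (leq A) (states A) {t \<in> R. leq A (delta A a t) r}"
      using J.adj(1)[OF jcR H rS] unfolding Dde by simp
  qed
  have Dd_in: "\<forall>a. \<forall>s\<in>states D. delta D a s \<in> states D"
  proof (intro allI ballI)
    fix a s assume "s \<in> states D"
    then have s: "s \<in> R" using Dst by simp
    have "{t \<in> R. leq A (delta A a t) s} \<subseteq> R" by blast
    then have "Join (leq A) (states A) {t \<in> R. leq A (delta A a t) s} \<in> R"
      using jcR unfolding J.jc_def by blast
    then show "delta D a s \<in> states D" using Dd[OF s] Dst by simp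
  qed
  have Dd_adj: "\<And>a r t. r \<in> R \<Longrightarrow> t \<in> R \<Longrightarrow> leq A t (delta D a r) \<longleftrightarrow> leq A (delta A a t) r"
  proof -
    fix a r t assume r: "r \<in> R" and t: "t \<in> R"
    have rS: "r \<in> states A" using r RS by blast
    show "leq A t (delta D a r) \<longleftrightarrow> leq A (delta A a t) r"
      using J.adj(2)[OF jcR H rS t] Dd[OF r] by simp
  qed
  let ?I = "Join (leq A) (states A) {t \<in> R. leq A t sf}"
  have IY: "{t \<in> R. leq A t sf} \<subseteq> R" by blast
  have IYS: "{t \<in> R. leq A t sf} \<subseteq> states A" using IY RS by (rule subset_trans)
  have IR: "?I \<in> R" using jcR IY unfolding J.jc_def by blast
  have Ile: "leq A ?I sf"
  proof (rule J.Join_least[OF IYS sf(1)])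
    fix t assume "t \<in> {t \<in> R. leq A t sf}" then show "leq A t sf" by blast
  qed
  have Di: "init D = ?I"
  proof -
    have e: "{t \<in> R. t \<notin> final A \<inter> R} = {t \<in> R. leq A t sf}"
    proof (rule set_eqI)
      fix t show "t \<in> {t \<in> R. t \<notin> final A \<inter> R} \<longleftrightarrow> t \<in> {t \<in> R. leq A t sf}"
        using sf(2) RS by blast
    qed
    have "?I \<notin> final A \<inter> R" using Ile sf(2) by blast
    then show ?thesis using J.greatest_jc[OF jcR, of "\<lambda>t. t \<notin> final A \<inter> R"] Din e by simp
  qed
  have Di_in: "init D \<in> states D" using Di IR Dst by simp
  have fhom: "dfa_hom D (simple (dual A)) f"
    unfolding dfa_hom_def
  proof (intro conjI allI ballI)
    show "jsl_hom (states D) (leq D) (states (simple (dual A))) (leq (simple (dual A))) f"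
      unfolding jsl_hom_def
    proof (intro conjI allI impI ballI)
      fix x assume "x \<in> states D" then show "f x \<in> states (simple (dual A))" using f_in Dst by blast
    next
      fix X assume X: "X \<subseteq> states D \<and> finite X"
      show "f (Join (leq D) (states D) X) = Join (leq (simple (dual A))) (states (simple (dual A))) (f ` X)"
        unfolding Dst Dle
      proof (rule join_transfer[OF _ _ _ _ Rantisym _ Dlub])
        show "\<forall>x\<in>R. f x \<in> states (simple (dual A))" by fact
        show "\<forall>u\<in>states (simple (dual A)). \<exists>v\<in>R. u = f v"
        proof
          fix u assume u: "u \<in> states (simple (dual A))"
          then have "g u \<in> R" "u = f (g u)" using g_in fg Dst by auto
          then show "\<exists>v\<in>R. u = f v" by blast
        qed
        show "\<forall>x\<in>R. \<forall>y\<in>R. leq A y x = leq (simple (dual A)) (f x) (f y)"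
        proof (intro ballI)
          fix x y assume x: "x \<in> R" and y: "y \<in> R"
          have "leq (simple (dual A)) (f x) (f y) \<longleftrightarrow> K x \<subseteq> K y"
            using fR[OF x] fR[OF y] by (simp add: simple_def)
          then show "leq A y x = leq (simple (dual A)) (f x) (f y)" using K_sub[OF x y] by simp
        qed
        show "\<forall>x\<in>states (simple (dual A)). \<forall>y\<in>states (simple (dual A)).
            leq (simple (dual A)) x y \<and> leq (simple (dual A)) y x \<longrightarrow> x = y"
          unfolding simple_def by (simp only: jsl_dfa.simps) (blast intro: subset_antisym)
        show "X \<subseteq> R" using X Dst by blast
        show "X \<subseteq> R" using X Dst by blast
      qed
    qed
  next
    fix a s assume s: "s \<in> states D"
    then have sR: "s \<in> R" using Dst by simp
    have dR: "delta D a s \<in> R" using Dd_in s Dst by blast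
    have "K (delta D a s) = {w. a # w \<in> K s}"
    proof (rule set_eqI)
      fix w
      have x: "deltaw A (rev w) (init A) \<in> R" using dwR RchR by blast
      show "w \<in> K (delta D a s) \<longleftrightarrow> w \<in> {w. a # w \<in> K s}"
        using Dd_adj[OF sR x, of a] by (simp add: K_def dwsnoc)
    qed
    then show "f (delta D a s) = delta (simple (dual A)) a (f s)"
      using fR sR dR by (simp add: simple_def)
  next
    have "K ?I = K sf"
    proof -
      have *: "\<And>x. x \<in> Rch \<Longrightarrow> leq A x ?I \<longleftrightarrow> leq A x sf"
      proof
        fix x assume x: "x \<in> Rch"
        have xS: "x \<in> states A" using x RchS by blast
        have IS: "?I \<in> states A" using IR RS by blast
        { assume "leq A x ?I" then show "leq A x sf" using J.trans[OF xS IS sf(1)] Ile by blast }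
        { assume "leq A x sf"
          then have "x \<in> {t \<in> R. leq A t sf}" using x RchR by blast
          then show "leq A x ?I" by (rule J.Join_upper[OF IYS]) }
      qed
      show ?thesis
      proof (rule set_eqI)
        fix w show "w \<in> K ?I \<longleftrightarrow> w \<in> K sf" using *[OF dwR[of w]] K_mem by simp
      qed
    qed
    moreover have "f (init D) = K ?I" using Di fR[OF IR] by simp
    moreover have "init (simple (dual A)) = K sf" using dinit fK[OF sf(1)] by (simp add: simple_def f_def)
    ultimately show "f (init D) = init (simple (dual A))" by simp
  next
    fix s assume s: "s \<in> states D"
    then have sR: "s \<in> R" using Dst by simp
    have fs: "f s \<in> lang (dual A) ` states (dual A)" using f_in sR SB by (simp add: f_def dstates)
    have "f s \<in> final (simple (dual A)) \<longleftrightarrow> [] \<in> f s" using fs by (simp add: simple_def)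
    also have "\<dots> \<longleftrightarrow> \<not> leq A (init A) s" using fR[OF sR] K_mem[of "[]" s] by (simp add: deltaw_def)
    also have "\<dots> \<longleftrightarrow> s \<in> final D" using sR Dfi by simp
    finally show "s \<in> final D \<longleftrightarrow> f s \<in> final (simple (dual A))" by simp
  qed
  have ghom: "dfa_hom (simple (dual A)) D g"
    by (rule inv_hom[OF fhom g_in fg gf DJ_in Dd_in Di_in])
  have P3: "dfa_iso (dual (reach A)) (simple (dual A))"
    unfolding dfa_iso_def D_def[symmetric] using fhom ghom gf fg by blast
  have P4: "reachable A \<longleftrightarrow> is_simple (dual A)"
  proof
    assume "reachable A"
    then have "states A \<subseteq> R" unfolding reachable_def R_def .
    then show "is_simple (dual A)" unfolding is_simple_def dstates
    proof (intro ballI impI)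
      fix s t assume sub: "states A \<subseteq> R" and s: "s \<in> states A" and t: "t \<in> states A"
        and e: "lang (dual A) s = lang (dual A) t"
      have "K s = K t" using e P1 s t by simp
      then show "s = t" using K_inj s t sub by blast
    qed
  next
    assume sim: "is_simple (dual A)"
    have "\<And>s. s \<in> states A \<Longrightarrow> s \<in> R"
    proof -
      fix s assume s: "s \<in> states A"
      have "lang (dual A) (rc s) = lang (dual A) s" using P1 K_rc s rcS by simp
      then have "rc s = s" using sim s rcS unfolding is_simple_def dstates by blast
      then show "s \<in> R" using rcR[of s] by simp
    qed
    then show "reachable A" unfolding reachable_def R_def by blast
  qed
  show ?thesis using P1 K_def P2 P3 P4 by simp
qed

end
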